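(* Let $G=(V,E)$ be a finite simple connected graph with $n\ge2$ nodes and $0\le t<\kappa(G)$. For every node $v\in V$ there exists a failure pattern $\varphi\in\Phi^\star_v$ such that no node $u\neq v$ crashes at round $1$ in $\varphi$ and $\mathrm{ecc}(v,\varphi)\ge\mathrm{radius}(G,t)$.
   Context: $\kappa(G)$ is the vertex connectivity of $G$; $N(v)$ is the neighbourhood of $v$. Synchronous rounds; in each round every node sends a message to every neighbour. Failure patterns. A failure pattern is a set $\varphi=\{(v,F_v,f_v): v\in F\}$ with $F\subseteq V$, $|F|\le t$, integers $f_v\ge1$ and nonempty $F_v\subseteq N(v)$: $v$ acts normally in rounds $<f_v$, in round $f_v$ (the round at which $v$ crashes) its messages reach exactly $N(v)\setminus F_v$, and afterwards it sends nothing. Nodes in $F$ are faulty, the others correct. $\Phi^{(t)}_{\mathrm{all}}$ is the set of all failure patterns with at most $t$ faulty nodes. Causal paths, eccentricity, radius. A causal path w.r.t. $\varphi$ from $v$ to $v'$ is $u_1=v,\dots,u_q=v'$ with $u_{i+1}\in N(u_i)$, $u_i$ not crashed during rounds $1,\dots,i-1$, and $u_{i+1}\notin F_{u_i}$ if $u_i$ crashes at round $i$; its length is $q-1$. $\mathrm{ecc}(v,\varphi)$ is the maximum over correct nodes $v'$ of the minimum length of a causal path w.r.t. $\varphi$ from $v$ to $v'$ ($\infty$ if some correct node has none). $\Phi^\star_v=\{\varphi\in\Phi^{(t)}_{\mathrm{all}}:\mathrm{ecc}(v,\varphi)<\infty\}$ and $\mathrm{radius}(G,t)=\min_{v\in V}\max_{\varphi\in\Phi^\star_v}\mathrm{ecc}(v,\varphi)$.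 *)

theory Defs
  imports Main "HOL-Library.Extended_Nat"
begin

definition simple_graph :: "'a set \<Rightarrow> ('a \<Rightarrow> 'a \<Rightarrow> bool) \<Rightarrow> bool" where
  "simple_graph V E \<longleftrightarrow> finite V \<and> (\<forall>u w. E u w \<longrightarrow> u \<in> V \<and> w \<in> V)
     \<and> (\<forall>u w. E u w \<longrightarrow> E w u) \<and> (\<forall>u. \<not> E u u)"

definition connected_set :: "'a set \<Rightarrow> ('a \<Rightarrow> 'a \<Rightarrow> bool) \<Rightarrow> bool" where
  "connected_set S E \<longleftrightarrow>
     (\<forall>u\<in>S. \<forall>w\<in>S. (\<lambda>x y. E x y \<and> x \<in> S \<and> y \<in> S)\<^sup>*\<^sup>* u w)"

definition vertex_connectivity :: "'a set \<Rightarrow> ('a \<Rightarrow> 'a \<Rightarrow> bool) \<Rightarrow> nat" where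
  "vertex_connectivity V E = Min {card S | S. S \<subseteq> V \<and>
      (card (V - S) \<le> 1 \<or> \<not> connected_set (V - S) E)}"

definition nbhd :: "('a \<Rightarrow> 'a \<Rightarrow> bool) \<Rightarrow> 'a \<Rightarrow> 'a set" where
  "nbhd E v = {u. E v u}"

text \<open>A failure pattern is a partial map: \<open>\<phi> v = Some (F_v, f_v)\<close> for faulty v
  (dom \<phi> = F), None for correct nodes.\<close>
type_synonym 'a failure_pattern = "'a \<Rightarrow> ('a set \<times> nat) option"

definition is_failure_pattern ::
  "'a set \<Rightarrow> ('a \<Rightarrow> 'a \<Rightarrow> bool) \<Rightarrow> nat \<Rightarrow> 'a failure_pattern \<Rightarrow> bool" where
  "is_failure_pattern V E t \<phi> \<longleftrightarrow> dom \<phi> \<subseteq> V \<and> card (dom \<phi>) \<le> t \<and>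
     (\<forall>v F f. \<phi> v = Some (F, f) \<longrightarrow> 1 \<le> f \<and> F \<noteq> {} \<and> F \<subseteq> nbhd E v)"

definition Phi_all :: "'a set \<Rightarrow> ('a \<Rightarrow> 'a \<Rightarrow> bool) \<Rightarrow> nat \<Rightarrow> 'a failure_pattern set" where
  "Phi_all V E t = {\<phi>. is_failure_pattern V E t \<phi>}"

definition alive_through :: "'a failure_pattern \<Rightarrow> 'a \<Rightarrow> nat \<Rightarrow> bool" where
  "alive_through \<phi> u i = (case \<phi> u of None \<Rightarrow> True | Some (F, f) \<Rightarrow> i < f)"

text \<open>Causal path \<open>xs = [u_1,...,u_q]\<close> (0-based index i corresponds to \<open>u_{i+1}\<close>,
  which sends in round i+1).\<close>
definition causal_path :: "('a \<Rightarrow> 'a \<Rightarrow> bool) \<Rightarrow> 'a failure_pattern \<Rightarrow> 'a list \<Rightarrow> bool" where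
  "causal_path E \<phi> xs \<longleftrightarrow> xs \<noteq> [] \<and>
     (\<forall>i < length xs. alive_through \<phi> (xs ! i) i) \<and>
     (\<forall>i. Suc i < length xs \<longrightarrow> E (xs ! i) (xs ! Suc i) \<and>
        (\<forall>F f. \<phi> (xs ! i) = Some (F, f) \<and> f = Suc i \<longrightarrow> xs ! Suc i \<notin> F))"

definition causal_dist ::
  "('a \<Rightarrow> 'a \<Rightarrow> bool) \<Rightarrow> 'a failure_pattern \<Rightarrow> 'a \<Rightarrow> 'a \<Rightarrow> enat" where
  "causal_dist E \<phi> v w = (INF xs \<in> {xs. causal_path E \<phi> xs \<and> hd xs = v \<and> last xs = w}.
      enat (length xs - 1))"

definition ecc ::
  "'a set \<Rightarrow> ('a \<Rightarrow> 'a \<Rightarrow> bool) \<Rightarrow> 'a \<Rightarrow> 'a failure_pattern \<Rightarrow> enat" where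
  "ecc V E v \<phi> = (SUP w \<in> V - dom \<phi>. causal_dist E \<phi> v w)"

definition Phi_star ::
  "'a set \<Rightarrow> ('a \<Rightarrow> 'a \<Rightarrow> bool) \<Rightarrow> nat \<Rightarrow> 'a \<Rightarrow> 'a failure_pattern set" where
  "Phi_star V E t v = {\<phi> \<in> Phi_all V E t. ecc V E v \<phi> < \<infinity>}"

definition radius :: "'a set \<Rightarrow> ('a \<Rightarrow> 'a \<Rightarrow> bool) \<Rightarrow> nat \<Rightarrow> enat" where
  "radius V E t = (INF v \<in> V. SUP \<phi> \<in> Phi_star V E t v. ecc V E v \<phi>)"

end

theory Submission
  imports Defs
begin

lemma alive_mono: "alive_through \<phi> u m \<Longrightarrow> k \<le> m \<Longrightarrow> alive_through \<phi> u k"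
  by (auto simp: alive_through_def split: option.splits)

lemma shortcut:
  assumes cp: "causal_path E \<phi> xs" and ij: "i < j" "j < length xs" "xs!i = xs!j"
  shows "causal_path E \<phi> (take i xs @ drop j xs)"
proof -
  define ys where "ys = take i xs @ drop j xs"
  define d where "d = j - i"
  have len: "length ys = i + (length xs - j)" using ij by (simp add: ys_def)
  have nth: "ys ! k = (if k < i then xs!k else xs!(k+d))" if "k < length ys" for k
    using that ij by (auto simp: ys_def nth_append d_def min_def add.commute)
  have d0: "d > 0" using ij by (simp add: d_def)
  have al: "\<forall>k<length xs. alive_through \<phi> (xs ! k) k"
   and ed: "\<And>k. Suc k < length xs \<Longrightarrow> E (xs ! k) (xs ! Suc k) \<and>
        (\<forall>F f. \<phi> (xs ! k) = Some (F, f) \<and> f = Suc k \<longrightarrow> xs ! Suc k \<notin> F)"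
    using cp by (auto simp: causal_path_def)
  have "ys \<noteq> []" using len ij by auto
  moreover have "\<forall>k<length ys. alive_through \<phi> (ys ! k) k"
  proof (intro allI impI)
    fix k assume k: "k < length ys"
    show "alive_through \<phi> (ys ! k) k"
    proof (cases "k < i")
      case True thus ?thesis using nth[OF k] al k len ij by auto
    next
      case False
      have "k + d < length xs" using k len False ij by (simp add: d_def)
      thus ?thesis using nth[OF k] al False alive_mono[of \<phi> "xs!(k+d)" "k+d" k] by auto
    qed
  qed
  moreover have "\<forall>k. Suc k < length ys \<longrightarrow> E (ys ! k) (ys ! Suc k) \<and>
        (\<forall>F f. \<phi> (ys ! k) = Some (F, f) \<and> f = Suc k \<longrightarrow> ys ! Suc k \<notin> F)"
  proof (intro allI impI)
    fix k assume k: "Suc k < length ys"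
    have k': "k < length ys" using k by simp
    consider "Suc k < i" | "Suc k = i" | "i \<le> k" by linarith
    thus "E (ys ! k) (ys ! Suc k) \<and>
        (\<forall>F f. \<phi> (ys ! k) = Some (F, f) \<and> f = Suc k \<longrightarrow> ys ! Suc k \<notin> F)"
    proof cases
      case 1
      thus ?thesis using nth[OF k] nth[OF k'] ed[of k] ij by auto
    next
      case 2
      have "ys ! Suc k = xs ! Suc k" using nth[OF k] 2 ij by (simp add: d_def)
      thus ?thesis using nth[OF k'] 2 ed[of k] ij by auto
    next
      case 3
      have lt: "Suc (k + d) < length xs" using k len 3 ij by (simp add: d_def)
      have a: "alive_through \<phi> (xs ! (k+d)) (k+d)" using al lt by auto
      have e1: "ys ! k = xs ! (k+d)" "ys ! Suc k = xs ! Suc (k+d)"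
        using nth[OF k] nth[OF k'] 3 by auto
      show ?thesis
      proof (intro conjI allI impI)
        show "E (ys ! k) (ys ! Suc k)" using e1 ed[OF lt] by simp
      next
        fix F f assume h: "\<phi> (ys ! k) = Some (F, f) \<and> f = Suc k"
        then have False using a e1 d0 by (auto simp: alive_through_def)
        thus "ys ! Suc k \<notin> F" ..
      qed
    qed
  qed
  ultimately show ?thesis unfolding ys_def[symmetric] causal_path_def by blast
qed

lemma path_in_V:
  assumes g: "simple_graph V E" and cp: "causal_path E \<phi> xs" and h: "hd xs \<in> V"
  shows "set xs \<subseteq> V"
proof
  fix x assume "x \<in> set xs"
  then obtain k where k: "k < length xs" "x = xs ! k" by (auto simp: in_set_conv_nth)
  have ed: "\<And>k. Suc k < length xs \<Longrightarrow> E (xs ! k) (xs ! Suc k)"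
    using cp by (auto simp: causal_path_def)
  have EV: "\<And>u w. E u w \<Longrightarrow> u \<in> V \<and> w \<in> V" using g by (auto simp: simple_graph_def)
  show "x \<in> V"
  proof (cases "Suc k < length xs")
    case True thus ?thesis using ed[OF True] EV k by blast
  next
    case False
    show ?thesis
    proof (cases k)
      case 0 thus ?thesis using h k cp by (auto simp: causal_path_def hd_conv_nth)
    next
      case (Suc m)
      thus ?thesis using ed[of m] EV k by auto
    qed
  qed
qed

lemma short_path:
  assumes g: "simple_graph V E"
  shows "causal_path E \<phi> xs \<Longrightarrow> hd xs \<in> V \<Longrightarrow> \<exists>ys. causal_path E \<phi> ys \<and> hd ys = hd xs \<and>
     last ys = last xs \<and> length ys \<le> card V"
proof (induction "length xs" arbitrary: xs rule: less_induct)
  case less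
  have fin: "finite V" using g by (simp add: simple_graph_def)
  have sV: "set xs \<subseteq> V" using path_in_V[OF g less.prems] .
  show ?case
  proof (cases "distinct xs")
    case True
    then have "length xs = card (set xs)" by (simp add: distinct_card)
    also have "\<dots> \<le> card V" using card_mono[OF fin sV] .
    finally show ?thesis using less.prems by blast
  next
    case False
    then obtain i j where ij0: "i < length xs" "j < length xs" "i \<noteq> j" "xs!i = xs!j"
      by (auto simp: distinct_conv_nth)
    then obtain i j where ij: "i < j" "j < length xs" "xs!i = xs!j"
      by (metis linorder_neqE_nat)
    define ys where "ys = take i xs @ drop j xs"
    have cy: "causal_path E \<phi> ys" using shortcut[OF less.prems(1) ij] ys_def by simp
    have ne: "xs \<noteq> []" using ij by auto
    have hy: "hd ys = hd xs"
    proof (cases "i = 0")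
      case True
      then have "ys = drop j xs" by (simp add: ys_def)
      then show ?thesis using ij True by (simp add: hd_drop_conv_nth hd_conv_nth ne)
    next
      case False
      then show ?thesis using ij by (simp add: ys_def hd_append)
    qed
    have ly: "last ys = last xs" using ij by (simp add: ys_def)
    have lt: "length ys < length xs" using ij by (simp add: ys_def)
    from less.hyps[OF lt cy] hy less.prems obtain zs where
      "causal_path E \<phi> zs \<and> hd zs = hd ys \<and> last zs = last ys \<and> length zs \<le> card V" by auto
    thus ?thesis using hy ly by auto
  qed
qed

lemma dist_le_path:
  "causal_path E \<phi> xs \<Longrightarrow> hd xs = v \<Longrightarrow> last xs = w \<Longrightarrow>
   causal_dist E \<phi> v w \<le> enat (length xs - 1)"
  unfolding causal_dist_def by (rule INF_lower) auto

lemma dist_bound: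
  assumes g: "simple_graph V E" and v: "v \<in> V" and fin: "causal_dist E \<phi> v w < \<infinity>"
  shows "causal_dist E \<phi> v w \<le> enat (card V)"
proof -
  have "{xs. causal_path E \<phi> xs \<and> hd xs = v \<and> last xs = w} \<noteq> {}"
  proof
    assume e: "{xs. causal_path E \<phi> xs \<and> hd xs = v \<and> last xs = w} = {}"
    have "causal_dist E \<phi> v w = \<infinity>" unfolding causal_dist_def e by (simp add: top_enat_def)
    with fin show False by simp
  qed
  then obtain xs where xs: "causal_path E \<phi> xs" "hd xs = v" "last xs = w" by auto
  obtain ys where ys: "causal_path E \<phi> ys" "hd ys = v" "last ys = w" "length ys \<le> card V"
    using short_path[OF g xs(1)] xs v by auto
  have "causal_dist E \<phi> v w \<le> enat (length ys - 1)" using dist_le_path[OF ys(1-3)] .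
  also have "\<dots> \<le> enat (card V)" using ys(4) by simp
  finally show ?thesis .
qed

lemma ecc_bound:
  assumes g: "simple_graph V E" and v: "v \<in> V" and fin: "ecc V E v \<phi> < \<infinity>"
  shows "ecc V E v \<phi> \<le> enat (card V)"
  unfolding ecc_def
proof (rule SUP_least)
  fix w assume w: "w \<in> V - dom \<phi>"
  have "causal_dist E \<phi> v w \<le> ecc V E v \<phi>" unfolding ecc_def using w by (rule SUP_upper)
  then have "causal_dist E \<phi> v w < \<infinity>" using fin by (rule le_less_trans)
  thus "causal_dist E \<phi> v w \<le> enat (card V)" using dist_bound[OF g v] by blast
qed

lemma walk_path:
  assumes "(\<lambda>x y. E x y \<and> x \<in> S \<and> y \<in> S)\<^sup>*\<^sup>* u w"
  shows "\<exists>xs. causal_path E (\<lambda>_. None) xs \<and> hd xs = u \<and> last xs = w"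
  using assms
proof (induction rule: converse_rtranclp_induct)
  case base
  show ?case by (rule exI[of _ "[w]"]) (simp add: causal_path_def alive_through_def)
next
  case (step x y)
  then obtain ys where ys: "causal_path E (\<lambda>_. None) ys" "hd ys = y" "last ys = w" by auto
  have ne: "ys \<noteq> []" using ys by (simp add: causal_path_def)
  have ed: "\<forall>i. Suc i < length ys \<longrightarrow> E (ys ! i) (ys ! Suc i)"
    using ys by (simp add: causal_path_def)
  have "E x (ys ! 0)" using step.hyps(1) ys ne by (simp add: hd_conv_nth)
  then have "\<forall>i. Suc i < length (x # ys) \<longrightarrow> E ((x # ys) ! i) ((x # ys) ! Suc i)"
    using ed by (auto simp: nth_Cons split: nat.splits)
  then have "causal_path E (\<lambda>_. None) (x # ys)"
    unfolding causal_path_def alive_through_def by auto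
  thus ?case using ys ne by (intro exI[of _ "x # ys"]) auto
qed

lemma agree_path:
  assumes "\<forall>x\<in>set xs. \<phi> x = \<psi> x"
  shows "causal_path E \<phi> xs = causal_path E \<psi> xs"
proof -
  have a: "\<forall>i<length xs. \<phi> (xs!i) = \<psi> (xs!i)" using assms by auto
  have b: "\<forall>i. Suc i < length xs \<longrightarrow> \<phi> (xs!i) = \<psi> (xs!i)" using a by auto
  show ?thesis unfolding causal_path_def alive_through_def using a b by auto
qed

lemma has_nbr:
  assumes g: "simple_graph V E" and c: "connected_set V E" and n: "card V \<ge> 2" and u: "u \<in> V"
  shows "\<exists>y. E u y"
proof -
  have fin: "finite V" using g by (simp add: simple_graph_def)
  have "card (V - {u}) \<ge> 1" using n u fin by (simp add: card_Diff_singleton)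
  then have "V - {u} \<noteq> {}" by (metis card.empty not_one_le_zero)
  then obtain x where x: "x \<in> V" "x \<noteq> u" by blast
  have "(\<lambda>x y. E x y \<and> x \<in> V \<and> y \<in> V)\<^sup>*\<^sup>* u x" using c x u by (simp add: connected_set_def)
  then show ?thesis using x(2) by (cases rule: converse_rtranclpE) auto
qed

theorem mainTheorem4:
  fixes V :: "'a set" and E :: "'a \<Rightarrow> 'a \<Rightarrow> bool" and t :: nat
  assumes "simple_graph V E"
    and "connected_set V E"
    and "card V \<ge> 2"
    and "t < vertex_connectivity V E"
    and "v \<in> V"
  shows "\<exists>\<phi> \<in> Phi_star V E t v.
           (\<forall>u F f. u \<noteq> v \<longrightarrow> \<phi> u = Some (F, f) \<longrightarrow> f \<noteq> 1) \<and>
           radius V E t \<le> ecc V E v \<phi>"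
proof -
  note g = assms(1) and c = assms(2) and v = assms(5)
  have e0: "ecc V E v (\<lambda>_. None) \<le> enat (card V)"
    unfolding ecc_def
  proof (rule SUP_least)
    fix w assume w: "w \<in> V - dom (\<lambda>_. None :: ('a set \<times> nat) option)"
    obtain xs where xs: "causal_path E (\<lambda>_. None) xs" "hd xs = v" "last xs = w"
      using walk_path[of E V v w] c v w by (auto simp: connected_set_def)
    have "causal_dist E (\<lambda>_. None) v w < \<infinity>"
      using dist_le_path[OF xs] by (rule le_less_trans) simp
    thus "causal_dist E (\<lambda>_. None) v w \<le> enat (card V)" using dist_bound[OF g v] by blast
  qed
  have "ecc V E v (\<lambda>_. None) < \<infinity>" using e0 by (rule le_less_trans) simp
  then have p0: "(\<lambda>_. None) \<in> Phi_star V E t v"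
    by (auto simp: Phi_star_def Phi_all_def is_failure_pattern_def)
  define A where "A = ecc V E v ` Phi_star V E t v"
  have Ane: "A \<noteq> {}" using p0 by (auto simp: A_def)
  have Abd: "\<And>y. y \<in> A \<Longrightarrow> y \<le> enat (card V)"
    using ecc_bound[OF g v] by (auto simp: A_def Phi_star_def)
  have Afin: "finite A" using finite_enat_bounded Abd by blast
  have "Sup A \<in> A" using Ane Afin by (simp add: Sup_enat_def)
  then obtain \<phi> where \<phi>: "\<phi> \<in> Phi_star V E t v" "ecc V E v \<phi> = Sup A" by (auto simp: A_def)
  have rad: "radius V E t \<le> Sup A"
    unfolding radius_def A_def using v by (rule INF_lower)
  define R where "R = (\<lambda>u. u \<noteq> v \<and> (\<exists>F. \<phi> u = Some (F, 1)))"
  define \<psi> where "\<psi> = (\<lambda>u. if R u then Some (nbhd E u, 2::nat) else \<phi> u)"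
  have domeq: "dom \<psi> = dom \<phi>" by (auto simp: \<psi>_def R_def split: if_splits)
  have pathseq: "causal_path E \<phi> xs = causal_path E \<psi> xs"
    if h: "hd xs = v" "last xs \<notin> dom \<phi>" for xs
  proof
    assume cp: "causal_path E \<phi> xs"
    have "\<forall>x\<in>set xs. \<phi> x = \<psi> x"
    proof
      fix x assume "x \<in> set xs"
      then obtain k where k: "k < length xs" "x = xs!k" by (auto simp: in_set_conv_nth)
      have "\<not> R x"
      proof
        assume r: "R x"
        have "alive_through \<phi> x k" using cp k by (auto simp: causal_path_def)
        then have "k = 0" using r by (auto simp: R_def alive_through_def)
        then show False using r k h cp by (auto simp: R_def hd_conv_nth causal_path_def)
      qed
      thus "\<phi> x = \<psi> x" by (simp add: \<psi>_def)
    qed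
    thus "causal_path E \<psi> xs" using cp agree_path by metis
  next
    assume cp: "causal_path E \<psi> xs"
    have "\<forall>x\<in>set xs. \<phi> x = \<psi> x"
    proof
      fix x assume "x \<in> set xs"
      then obtain k where k: "k < length xs" "x = xs!k" by (auto simp: in_set_conv_nth)
      have "\<not> R x"
      proof
        assume r: "R x"
        have ps: "\<psi> x = Some (nbhd E x, 2)" using r by (simp add: \<psi>_def)
        have "alive_through \<psi> x k" using cp k by (auto simp: causal_path_def)
        then have k2: "k < 2" using ps by (simp add: alive_through_def)
        have ne: "xs \<noteq> []" using cp by (simp add: causal_path_def)
        show False
        proof (cases "k = 0")
          case True then show False using r k h ne by (auto simp: R_def hd_conv_nth)
        next
          case False
          then have k1: "k = 1" using k2 by simp
          show False
          proof (cases "Suc 1 < length xs")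
            case True
            then have "E (xs!1) (xs!Suc 1)" "xs ! Suc 1 \<notin> nbhd E (xs!1)"
              using cp ps k k1 unfolding causal_path_def by auto
            thus False by (simp add: nbhd_def)
          next
            case False
            then have "length xs = 2" using k k1 by simp
            then have "last xs = x" using k k1 ne by (simp add: last_conv_nth)
            thus False using r h by (auto simp: R_def)
          qed
        qed
      qed
      thus "\<phi> x = \<psi> x" by (simp add: \<psi>_def)
    qed
    thus "causal_path E \<phi> xs" using cp agree_path by metis
  qed
  have disteq: "causal_dist E \<psi> v w = causal_dist E \<phi> v w" if w: "w \<notin> dom \<phi>" for w
  proof -
    have "{xs. causal_path E \<psi> xs \<and> hd xs = v \<and> last xs = w} =
          {xs. causal_path E \<phi> xs \<and> hd xs = v \<and> last xs = w}"
      using pathseq w by auto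
    thus ?thesis by (simp add: causal_dist_def)
  qed
  have ecceq: "ecc V E v \<psi> = ecc V E v \<phi>"
    unfolding ecc_def domeq using disteq by (intro SUP_cong) auto
  have pf: "is_failure_pattern V E t \<phi>" using \<phi>(1) by (simp add: Phi_star_def Phi_all_def)
  have "is_failure_pattern V E t \<psi>"
    unfolding is_failure_pattern_def domeq
  proof (intro conjI)
    show "dom \<phi> \<subseteq> V" "card (dom \<phi>) \<le> t" using pf by (auto simp: is_failure_pattern_def)
  next
    show "\<forall>u F f. \<psi> u = Some (F, f) \<longrightarrow> 1 \<le> f \<and> F \<noteq> {} \<and> F \<subseteq> nbhd E u"
  proof (intro allI impI)
    fix u F f assume h: "\<psi> u = Some (F, f)"
    show "1 \<le> f \<and> F \<noteq> {} \<and> F \<subseteq> nbhd E u"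
    proof (cases "R u")
      case True
      then have "u \<in> dom \<phi>" by (auto simp: R_def)
      then have "u \<in> V" using pf by (auto simp: is_failure_pattern_def)
      then obtain y where "E u y" using has_nbr[OF g c assms(3)] by blast
      then show ?thesis using h True by (auto simp: \<psi>_def nbhd_def)
    next
      case False
      then show ?thesis using h pf by (auto simp: \<psi>_def is_failure_pattern_def)
    qed
  qed
  qed
  then have "\<psi> \<in> Phi_star V E t v"
    using \<phi>(1) ecceq by (simp add: Phi_star_def Phi_all_def)
  moreover have "\<forall>u F f. u \<noteq> v \<longrightarrow> \<psi> u = Some (F, f) \<longrightarrow> f \<noteq> 1"
    by (auto simp: \<psi>_def R_def)
  moreover have "radius V E t \<le> ecc V E v \<psi>" using rad \<phi>(2) ecceq by simp
  ultimately show ?thesis by blast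
qed

end
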